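(* For every finite graph $G$ with at least one edge and every positive integer $r$, \[ \mathrm{scol}_r(G)\le \biggl(3+\mathrm{tww}(G)\sum_{i=0}^{r-1}(\mathrm{tww}(G)-1)^{i}\biggr)\,\bar\omega(G)\le \bigl(\mathrm{tww}(G)^r+3\bigr)\,\bar\omega(G), \] with the convention $0^0=1$.
   Context: $\bar\omega(G)$ denotes the maximum integer $s$ such that the complete bipartite graph $K_{s,s}$ is a subgraph of $G$. Twin-width: a trigraph is a vertex set together with two disjoint sets of edges, black and red. Contracting two vertices $x,y$ of a trigraph produces a trigraph in which $x,y$ are replaced by a new vertex $z$ adjacent to every other vertex $w$ adjacent (by any edge) to $x$ or to $y$; the edge $zw$ is black if $xw$ and $yw$ are both black edges, and red otherwise; all other edges are unchanged. A $d$-contraction sequence of an $n$-vertex graph $G$ is a sequence of trigraphs $\mathbf G_n,\dots,\mathbf G_1$ where $\mathbf G_n$ is $G$ with all edges black, each $\mathbf G_i$ is obtained from $\mathbf G_{i+1}$ by one contraction, $\mathbf G_1$ has a single vertex, and every vertex of every $\mathbf G_i$ is incident to at most $d$ red edges. The twin-width $\mathrm{tww}(G)$ is the minimum $d$ for which $G$ has a $d$-contraction sequence. Strong colouring number: for a linear order $L$ of $V(G)$, a vertex $u$ is strongly $r$-reachable from $v$ if there is a path of length at most $r$ between $u$ and $v$ with $u\le_L v$ and all inner vertices $w$ satisfying $v<_L w$; $\mathrm{Sreach}_r[L,v]$ is the set of such $u$ (including $v$), and $\mathrm{scol}_r(G)=\min_L\max_{v}|\mathrm{Sreach}_r[L,v]|$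 over linear orders $L$ of $V(G)$. *)

theory Defs
  imports Main
begin

definition graph :: "'a set \<Rightarrow> 'a set set \<Rightarrow> bool" where
  "graph V E \<longleftrightarrow> finite V \<and> (\<forall>e\<in>E. \<exists>u v. e = {u, v} \<and> u \<noteq> v \<and> u \<in> V \<and> v \<in> V)"

definition biclique_num :: "'a set \<Rightarrow> 'a set set \<Rightarrow> nat" where
  "biclique_num V E = (GREATEST s. \<exists>A B. A \<subseteq> V \<and> B \<subseteq> V \<and> A \<inter> B = {} \<and>
      card A = s \<and> card B = s \<and> (\<forall>a\<in>A. \<forall>b\<in>B. {a, b} \<in> E))"

text \<open>The vertices of the
  trigraphs in a contraction sequence of G are represented as sets of vertices of G; the new
  vertex z created by contracting x and y is represented by x \<union> y.\<close>

type_synonym 'a trigraph = "'a set set \<times> 'a set set set \<times> 'a set set set"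

definition tvert :: "'a trigraph \<Rightarrow> 'a set set" where "tvert T = fst T"
definition tblack :: "'a trigraph \<Rightarrow> 'a set set set" where "tblack T = fst (snd T)"
definition tred :: "'a trigraph \<Rightarrow> 'a set set set" where "tred T = snd (snd T)"

definition contract :: "'a trigraph \<Rightarrow> 'a set \<Rightarrow> 'a set \<Rightarrow> 'a trigraph" where
  "contract T x y =
    (let P = tvert T; B = tblack T; R = tred T; z = x \<union> y; W = P - {x, y} in
     (insert z W,
      {e \<in> B. x \<notin> e \<and> y \<notin> e} \<union>
        {{z, w} | w. w \<in> W \<and> {x, w} \<in> B \<and> {y, w} \<in> B},
      {e \<in> R. x \<notin> e \<and> y \<notin> e} \<union>
        {{z, w} | w. w \<in> W \<and> ({x, w} \<in> B \<union> R \<or> {y, w} \<in> B \<union> R)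
                     \<and> \<not> ({x, w} \<in> B \<and> {y, w} \<in> B)}))"

definition red_deg :: "'a trigraph \<Rightarrow> 'a set \<Rightarrow> nat" where
  "red_deg T v = card {e \<in> tred T. v \<in> e}"

definition initial_trigraph :: "'a set \<Rightarrow> 'a set set \<Rightarrow> 'a trigraph" where
  "initial_trigraph V E = ((\<lambda>v. {v}) ` V, {{{u}, {v}} | u v. {u, v} \<in> E}, {})"

text \<open>A d-contraction sequence, listed as G_n, G_{n-1}, ..., G_1.\<close>
definition contraction_seq :: "'a set \<Rightarrow> 'a set set \<Rightarrow> nat \<Rightarrow> 'a trigraph list \<Rightarrow> bool" where
  "contraction_seq V E d S \<longleftrightarrow>
     S \<noteq> [] \<and> S ! 0 = initial_trigraph V E \<and>
     (\<forall>k. Suc k < length S \<longrightarrow>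
        (\<exists>x y. x \<in> tvert (S ! k) \<and> y \<in> tvert (S ! k) \<and> x \<noteq> y \<and>
               S ! Suc k = contract (S ! k) x y)) \<and>
     card (tvert (last S)) = 1 \<and>
     (\<forall>T \<in> set S. \<forall>v \<in> tvert T. red_deg T v \<le> d)"

definition tww :: "'a set \<Rightarrow> 'a set set \<Rightarrow> nat" where
  "tww V E = (LEAST d. \<exists>S. contraction_seq V E d S)"

definition linord :: "'a set \<Rightarrow> 'a list \<Rightarrow> bool" where
  "linord V L \<longleftrightarrow> distinct L \<and> set L = V"

definition ord_le :: "'a list \<Rightarrow> 'a \<Rightarrow> 'a \<Rightarrow> bool" where
  "ord_le L u v \<longleftrightarrow> (\<exists>i j. i \<le> j \<and> j < length L \<and> L ! i = u \<and> L ! j = v)"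

definition ord_less :: "'a list \<Rightarrow> 'a \<Rightarrow> 'a \<Rightarrow> bool" where
  "ord_less L u v \<longleftrightarrow> (\<exists>i j. i < j \<and> j < length L \<and> L ! i = u \<and> L ! j = v)"

text \<open>A path given as its vertex list (distinct vertices, consecutive ones adjacent);
  its length is the number of edges.\<close>
definition is_path :: "'a set \<Rightarrow> 'a set set \<Rightarrow> 'a list \<Rightarrow> bool" where
  "is_path V E ps \<longleftrightarrow> ps \<noteq> [] \<and> distinct ps \<and> set ps \<subseteq> V \<and>
     (\<forall>i. Suc i < length ps \<longrightarrow> {ps ! i, ps ! Suc i} \<in> E)"

definition Sreach :: "'a set \<Rightarrow> 'a set set \<Rightarrow> nat \<Rightarrow> 'a list \<Rightarrow> 'a \<Rightarrow> 'a set" where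
  "Sreach V E r L v = {u \<in> V. ord_le L u v \<and>
     (\<exists>ps. is_path V E ps \<and> hd ps = v \<and> last ps = u \<and> length ps - 1 \<le> r \<and>
          (\<forall>i. 0 < i \<and> i < length ps - 1 \<longrightarrow> ord_less L v (ps ! i)))}"

definition scol :: "'a set \<Rightarrow> 'a set set \<Rightarrow> nat \<Rightarrow> nat" where
  "scol V E r = Min {Max ((\<lambda>v. card (Sreach V E r L v)) ` V) | L. linord V L}"

end

theory Submission imports Defs begin

definition cmpl :: "'a set set \<Rightarrow> 'a set \<Rightarrow> 'a set \<Rightarrow> bool" where
  "cmpl E P Q \<longleftrightarrow> (\<forall>a\<in>P. \<forall>b\<in>Q. {a,b} \<in> E)"

definition adjs :: "'a set set \<Rightarrow> 'a set \<Rightarrow> 'a set \<Rightarrow> bool" where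
  "adjs E P Q \<longleftrightarrow> (\<exists>a\<in>P. \<exists>b\<in>Q. {a,b} \<in> E)"

lemma cmpl_sym: "cmpl E P Q \<Longrightarrow> cmpl E Q P"
  unfolding cmpl_def by (metis insert_commute)

definition tinv :: "'a set \<Rightarrow> 'a set set \<Rightarrow> 'a trigraph \<Rightarrow> bool" where
"tinv V E T \<longleftrightarrow> (\<forall>P\<in>tvert T. P \<noteq> {} \<and> P \<subseteq> V) \<and>
   (\<forall>P\<in>tvert T. \<forall>Q\<in>tvert T. P \<noteq> Q \<longrightarrow> P \<inter> Q = {}) \<and> \<Union>(tvert T) = V \<and>
   (\<forall>e\<in>tblack T. \<exists>P Q. e = {P,Q} \<and> P \<in> tvert T \<and> Q \<in> tvert T \<and> P \<noteq> Q \<and> cmpl E P Q) \<and>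
   (\<forall>e\<in>tred T. \<exists>P Q. e = {P,Q} \<and> P \<in> tvert T \<and> Q \<in> tvert T \<and> P \<noteq> Q) \<and>
   (\<forall>P\<in>tvert T. \<forall>Q\<in>tvert T. P \<noteq> Q \<longrightarrow> adjs E P Q \<longrightarrow> {P,Q} \<in> tblack T \<union> tred T)"

lemma contract_simps:
  "tvert (contract T x y) = insert (x \<union> y) (tvert T - {x,y})"
  "tblack (contract T x y) = {e \<in> tblack T. x \<notin> e \<and> y \<notin> e} \<union>
        {{x \<union> y, w} | w. w \<in> tvert T - {x,y} \<and> {x, w} \<in> tblack T \<and> {y, w} \<in> tblack T}"
  "tred (contract T x y) = {e \<in> tred T. x \<notin> e \<and> y \<notin> e} \<union>
        {{x \<union> y, w} | w. w \<in> tvert T - {x,y} \<and> ({x, w} \<in> tblack T \<union> tred T \<or> {y, w} \<in> tblack T \<union> tred T)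
                     \<and> \<not> ({x, w} \<in> tblack T \<and> {y, w} \<in> tblack T)}"
  by (simp_all add: contract_def Let_def tvert_def tblack_def tred_def)

lemma tinv_initial:
  assumes "graph V E"
  shows "tinv V E (initial_trigraph V E)"
proof -
  have tv: "tvert (initial_trigraph V E) = (\<lambda>v. {v}) ` V"
    and tb: "tblack (initial_trigraph V E) = {{{u}, {v}} | u v. {u, v} \<in> E}"
    and tr: "tred (initial_trigraph V E) = {}"
    by (simp_all add: initial_trigraph_def tvert_def tblack_def tred_def)
  have E: "\<And>u v. {u,v} \<in> E \<Longrightarrow> u \<noteq> v \<and> u \<in> V \<and> v \<in> V"
    using assms unfolding graph_def by (metis doubleton_eq_iff)
  have b: "\<forall>e\<in>{{{u}, {v}} |u v. {u, v} \<in> E}. \<exists>P Q. e = {P, Q} \<and> P \<in> (\<lambda>v. {v}) ` V \<and> Q \<in> (\<lambda>v. {v}) ` V \<and> P \<noteq> Q \<and> cmpl E P Q"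
  proof
    fix e assume "e \<in> {{{u}, {v}} |u v. {u, v} \<in> E}"
    then obtain u v where uv: "e = {{u},{v}}" "{u,v} \<in> E" by blast
    have "cmpl E {u} {v}" using uv by (simp add: cmpl_def)
    then show "\<exists>P Q. e = {P, Q} \<and> P \<in> (\<lambda>v. {v}) ` V \<and> Q \<in> (\<lambda>v. {v}) ` V \<and> P \<noteq> Q \<and> cmpl E P Q"
      using E[OF uv(2)] uv(1) by blast
  qed
  have a: "\<forall>P\<in>(\<lambda>v. {v}) ` V. \<forall>Q\<in>(\<lambda>v. {v}) ` V. P \<noteq> Q \<longrightarrow> adjs E P Q \<longrightarrow> {P, Q} \<in> {{{u}, {v}} |u v. {u, v} \<in> E} \<union> {}"
    by (auto simp: adjs_def)
  have p1: "\<forall>P\<in>(\<lambda>v. {v}) ` V. P \<noteq> {} \<and> P \<subseteq> V" by auto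
  have p2: "\<forall>P\<in>(\<lambda>v. {v}) ` V. \<forall>Q\<in>(\<lambda>v. {v}) ` V. P \<noteq> Q \<longrightarrow> P \<inter> Q = {}" by auto
  have p3: "\<Union>((\<lambda>v. {v}) ` V) = V" by auto
  show ?thesis unfolding tinv_def tv tb tr using b a p1 p2 p3 by blast
qed


lemma tinvD:
  assumes "tinv V E T"
  shows tinv_ne: "\<And>P. P \<in> tvert T \<Longrightarrow> P \<noteq> {} \<and> P \<subseteq> V"
    and tinv_dj: "\<And>P Q. P \<in> tvert T \<Longrightarrow> Q \<in> tvert T \<Longrightarrow> P \<noteq> Q \<Longrightarrow> P \<inter> Q = {}"
    and tinv_un: "\<Union>(tvert T) = V"
    and tinv_bl: "\<And>e. e \<in> tblack T \<Longrightarrow> \<exists>P Q. e = {P,Q} \<and> P \<in> tvert T \<and> Q \<in> tvert T \<and> P \<noteq> Q \<and> cmpl E P Q"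
    and tinv_rd: "\<And>e. e \<in> tred T \<Longrightarrow> \<exists>P Q. e = {P,Q} \<and> P \<in> tvert T \<and> Q \<in> tvert T \<and> P \<noteq> Q"
    and tinv_ad: "\<And>P Q. P \<in> tvert T \<Longrightarrow> Q \<in> tvert T \<Longrightarrow> P \<noteq> Q \<Longrightarrow> adjs E P Q \<Longrightarrow> {P,Q} \<in> tblack T \<union> tred T"
proof -
  have I: "(\<forall>P\<in>tvert T. P \<noteq> {} \<and> P \<subseteq> V) \<and>
   (\<forall>P\<in>tvert T. \<forall>Q\<in>tvert T. P \<noteq> Q \<longrightarrow> P \<inter> Q = {}) \<and> \<Union>(tvert T) = V \<and>
   (\<forall>e\<in>tblack T. \<exists>P Q. e = {P,Q} \<and> P \<in> tvert T \<and> Q \<in> tvert T \<and> P \<noteq> Q \<and> cmpl E P Q) \<and>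
   (\<forall>e\<in>tred T. \<exists>P Q. e = {P,Q} \<and> P \<in> tvert T \<and> Q \<in> tvert T \<and> P \<noteq> Q) \<and>
   (\<forall>P\<in>tvert T. \<forall>Q\<in>tvert T. P \<noteq> Q \<longrightarrow> adjs E P Q \<longrightarrow> {P,Q} \<in> tblack T \<union> tred T)"
    using assms unfolding tinv_def .
  show "\<And>P. P \<in> tvert T \<Longrightarrow> P \<noteq> {} \<and> P \<subseteq> V" using I by simp
  show "\<And>P Q. P \<in> tvert T \<Longrightarrow> Q \<in> tvert T \<Longrightarrow> P \<noteq> Q \<Longrightarrow> P \<inter> Q = {}" using I by simp
  show "\<Union>(tvert T) = V" using I by simp
  show "\<And>e. e \<in> tblack T \<Longrightarrow> \<exists>P Q. e = {P,Q} \<and> P \<in> tvert T \<and> Q \<in> tvert T \<and> P \<noteq> Q \<and> cmpl E P Q"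
    using I by simp
  show "\<And>e. e \<in> tred T \<Longrightarrow> \<exists>P Q. e = {P,Q} \<and> P \<in> tvert T \<and> Q \<in> tvert T \<and> P \<noteq> Q" using I by simp
  show "\<And>P Q. P \<in> tvert T \<Longrightarrow> Q \<in> tvert T \<Longrightarrow> P \<noteq> Q \<Longrightarrow> adjs E P Q \<Longrightarrow> {P,Q} \<in> tblack T \<union> tred T"
    using I by simp
qed

lemma tinv_contract:
  assumes inv: "tinv V E T" and x: "x \<in> tvert T" and y: "y \<in> tvert T" and xy: "x \<noteq> y"
  shows "tinv V E (contract T x y)"
proof -
  define W where "W = tvert T - {x,y}"
  define z where "z = x \<union> y"
  define B where "B = tblack T"
  define R where "R = tred T"
  define B' where "B' = {e \<in> B. x \<notin> e \<and> y \<notin> e} \<union> {{z, w} | w. w \<in> W \<and> {x, w} \<in> B \<and> {y, w} \<in> B}"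
  define R' where "R' = {e \<in> R. x \<notin> e \<and> y \<notin> e} \<union>
        {{z, w} | w. w \<in> W \<and> ({x, w} \<in> B \<union> R \<or> {y, w} \<in> B \<union> R) \<and> \<not> ({x, w} \<in> B \<and> {y, w} \<in> B)}"
  have cs: "tvert (contract T x y) = insert z W" "tblack (contract T x y) = B'" "tred (contract T x y) = R'"
    unfolding contract_simps W_def z_def B'_def R'_def B_def R_def by simp_all
  have ne: "\<And>P. P \<in> tvert T \<Longrightarrow> P \<noteq> {} \<and> P \<subseteq> V"
    and dj: "\<And>P Q. P \<in> tvert T \<Longrightarrow> Q \<in> tvert T \<Longrightarrow> P \<noteq> Q \<Longrightarrow> P \<inter> Q = {}"
    and un: "\<Union>(tvert T) = V"
    and bl: "\<And>e. e \<in> B \<Longrightarrow> \<exists>P Q. e = {P,Q} \<and> P \<in> tvert T \<and> Q \<in> tvert T \<and> P \<noteq> Q \<and> cmpl E P Q"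
    and rd: "\<And>e. e \<in> R \<Longrightarrow> \<exists>P Q. e = {P,Q} \<and> P \<in> tvert T \<and> Q \<in> tvert T \<and> P \<noteq> Q"
    and ad: "\<And>P Q. P \<in> tvert T \<Longrightarrow> Q \<in> tvert T \<Longrightarrow> P \<noteq> Q \<Longrightarrow> adjs E P Q \<Longrightarrow> {P,Q} \<in> B \<union> R"
    using tinvD[OF inv] unfolding B_def R_def by auto
  have Wsub: "W \<subseteq> tvert T" unfolding W_def by blast
  have zW: "\<And>w. w \<in> W \<Longrightarrow> w \<noteq> z \<and> w \<inter> z = {}"
  proof -
    fix w assume w: "w \<in> W"
    have "w \<inter> x = {}" "w \<inter> y = {}" using dj[of w x] dj[of w y] w x y unfolding W_def by auto
    moreover have "w \<noteq> {}" using ne w Wsub by auto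
    ultimately show "w \<noteq> z \<and> w \<inter> z = {}" unfolding z_def by auto
  qed
  have cgen: "\<And>a w. {a,w} \<in> B \<Longrightarrow> cmpl E a w"
  proof -
    fix a w assume aw: "{a,w} \<in> B"
    from bl[OF aw] obtain P Q where PQ0: "{a,w} = {P,Q} \<and> P \<in> tvert T \<and> Q \<in> tvert T \<and> P \<noteq> Q \<and> cmpl E P Q" by iprover
    then have PQ: "{a,w} = {P,Q}" "cmpl E P Q" by simp_all
    from PQ(1) have "(a = P \<and> w = Q) \<or> (a = Q \<and> w = P)" by (rule doubleton_eq_iff[THEN iffD1])
    then show "cmpl E a w"
    proof
      assume "a = P \<and> w = Q" then show ?thesis using PQ(2) by simp
    next
      assume "a = Q \<and> w = P" then show ?thesis using cmpl_sym[OF PQ(2)] by simp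
    qed
  qed
  have p1: "\<forall>P\<in>insert z W. P \<noteq> {} \<and> P \<subseteq> V" using ne x y Wsub unfolding z_def by blast
  have p2: "\<forall>P\<in>insert z W. \<forall>Q\<in>insert z W. P \<noteq> Q \<longrightarrow> P \<inter> Q = {}"
  proof (intro ballI impI)
    fix P Q assume P: "P \<in> insert z W" and Q: "Q \<in> insert z W" and PQ: "P \<noteq> Q"
    show "P \<inter> Q = {}"
    proof (cases "P = z")
      case True then show ?thesis using Q PQ zW[of Q] by auto
    next
      case False
      then have P': "P \<in> W" using P by auto
      show ?thesis
      proof (cases "Q = z")
        case True then show ?thesis using zW[OF P'] by auto
      next
        case False then have "Q \<in> W" using Q by auto
        then show ?thesis using P' PQ dj Wsub by auto
      qed
    qed
  qed
  have p3: "\<Union>(insert z W) = V"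
  proof -
    have "insert z W = insert (x \<union> y) (tvert T - {x,y})" unfolding z_def W_def ..
    also have "\<Union>\<dots> = \<Union>(tvert T)" using x y by blast
    finally show ?thesis using un by simp
  qed
  have p4: "\<forall>e\<in>B'. \<exists>P Q. e = {P, Q} \<and> P \<in> insert z W \<and> Q \<in> insert z W \<and> P \<noteq> Q \<and> cmpl E P Q"
  proof
    fix e assume e: "e \<in> B'"
    show "\<exists>P Q. e = {P, Q} \<and> P \<in> insert z W \<and> Q \<in> insert z W \<and> P \<noteq> Q \<and> cmpl E P Q"
    proof (cases "e \<in> B \<and> x \<notin> e \<and> y \<notin> e")
      case True
      from bl[of e] True obtain P Q where PQ: "e = {P,Q} \<and> P \<in> tvert T \<and> Q \<in> tvert T \<and> P \<noteq> Q \<and> cmpl E P Q"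
        by iprover
      then have "P \<in> W" "Q \<in> W" using True unfolding W_def by auto
      then have "e = {P, Q} \<and> P \<in> insert z W \<and> Q \<in> insert z W \<and> P \<noteq> Q \<and> cmpl E P Q" using PQ by simp
      then show ?thesis by iprover
    next
      case False
      then have "e \<in> {{z, w} | w. w \<in> W \<and> {x, w} \<in> B \<and> {y, w} \<in> B}" using e False unfolding B'_def Un_iff by (elim disjE) simp_all
      then obtain w where w: "e = {z, w} \<and> w \<in> W \<and> {x, w} \<in> B \<and> {y, w} \<in> B"
        unfolding mem_Collect_eq by iprover
      have "cmpl E z w" using cgen[of x w] cgen[of y w] w unfolding z_def cmpl_def by auto
      then have "e = {z, w} \<and> z \<in> insert z W \<and> w \<in> insert z W \<and> z \<noteq> w \<and> cmpl E z w" using w zW[of w] by auto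
      then show ?thesis by iprover
    qed
  qed
  have p5: "\<forall>e\<in>R'. \<exists>P Q. e = {P, Q} \<and> P \<in> insert z W \<and> Q \<in> insert z W \<and> P \<noteq> Q"
  proof
    fix e assume e: "e \<in> R'"
    show "\<exists>P Q. e = {P, Q} \<and> P \<in> insert z W \<and> Q \<in> insert z W \<and> P \<noteq> Q"
    proof (cases "e \<in> R \<and> x \<notin> e \<and> y \<notin> e")
      case True
      from rd[of e] True obtain P Q where PQ: "e = {P,Q} \<and> P \<in> tvert T \<and> Q \<in> tvert T \<and> P \<noteq> Q"
        by iprover
      then have "P \<in> W" "Q \<in> W" using True unfolding W_def by auto
      then have "e = {P, Q} \<and> P \<in> insert z W \<and> Q \<in> insert z W \<and> P \<noteq> Q" using PQ by simp
      then show ?thesis by iprover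
    next
      case False
      then have "e \<in> {{z, w} | w. w \<in> W \<and> ({x, w} \<in> B \<union> R \<or> {y, w} \<in> B \<union> R) \<and> \<not> ({x, w} \<in> B \<and> {y, w} \<in> B)}"
        using e False unfolding R'_def Un_iff by (elim disjE) simp_all
      then obtain w where w: "e = {z, w} \<and> w \<in> W"
        unfolding mem_Collect_eq by blast
      then have "e = {z, w} \<and> z \<in> insert z W \<and> w \<in> insert z W \<and> z \<noteq> w" using zW[of w] by auto
      then show ?thesis by iprover
    qed
  qed
  have zw: "\<And>w. w \<in> W \<Longrightarrow> adjs E z w \<Longrightarrow> {z, w} \<in> B' \<union> R'"
  proof -
    fix w assume w: "w \<in> W" and aw: "adjs E z w"
    have "adjs E x w \<or> adjs E y w" using aw unfolding z_def adjs_def by blast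
    moreover have "w \<in> tvert T" "x \<noteq> w" "y \<noteq> w" using w Wsub unfolding W_def by auto
    ultimately have "{x, w} \<in> B \<union> R \<or> {y, w} \<in> B \<union> R"
      using ad[of x w] ad[of y w] x y by blast
    then show "{z, w} \<in> B' \<union> R'"
    proof (cases "{x, w} \<in> B \<and> {y, w} \<in> B")
      case True then have "{z,w} \<in> B'" unfolding B'_def using w by blast
      then show ?thesis by blast
    next
      case False then have "{z,w} \<in> R'" unfolding R'_def using w \<open>{x, w} \<in> B \<union> R \<or> {y, w} \<in> B \<union> R\<close> by blast
      then show ?thesis by blast
    qed
  qed
  have p6: "\<forall>P\<in>insert z W. \<forall>Q\<in>insert z W. P \<noteq> Q \<longrightarrow> adjs E P Q \<longrightarrow> {P, Q} \<in> B' \<union> R'"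
  proof (intro ballI impI)
    fix P Q assume P: "P \<in> insert z W" and Q: "Q \<in> insert z W" and PQ: "P \<noteq> Q" and a: "adjs E P Q"
    show "{P, Q} \<in> B' \<union> R'"
    proof (cases "P = z")
      case True
      then have "Q \<in> W" using Q PQ by auto
      then show ?thesis using zw[of Q] a True by simp
    next
      case Pz: False
      show ?thesis
      proof (cases "Q = z")
        case True
        then have "P \<in> W" using P Pz by auto
        moreover have "adjs E z P" using a True unfolding adjs_def by (metis insert_commute)
        ultimately show ?thesis using zw[of P] True by (simp add: insert_commute)
      next
        case False
        then have PW: "P \<in> W" and QW: "Q \<in> W" using P Q Pz by auto
        then have "{P,Q} \<in> B \<union> R" using ad PQ a Wsub by blast
        moreover have "x \<notin> {P,Q}" "y \<notin> {P,Q}" using PW QW unfolding W_def by auto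
        ultimately show ?thesis unfolding B'_def R'_def by blast
      qed
    qed
  qed
  show ?thesis unfolding tinv_def cs using p1 p2 p3 p4 p5 p6 by blast
qed


lemma tinv_black_cmpl:
  assumes "tinv V E T" "{a,w} \<in> tblack T"
  shows "cmpl E a w \<and> a \<noteq> w \<and> a \<in> tvert T \<and> w \<in> tvert T"
proof -
  from tinv_bl[OF assms(1) assms(2)] obtain P Q where
    PQ: "{a,w} = {P,Q} \<and> P \<in> tvert T \<and> Q \<in> tvert T \<and> P \<noteq> Q \<and> cmpl E P Q" by iprover
  from PQ have "(a = P \<and> w = Q) \<or> (a = Q \<and> w = P)" by (metis doubleton_eq_iff)
  then show ?thesis
  proof
    assume "a = P \<and> w = Q" then show ?thesis using PQ by simp
  next
    assume "a = Q \<and> w = P" then show ?thesis using PQ cmpl_sym[of E P Q] by auto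
  qed
qed

lemma tinv_red_in:
  assumes "tinv V E T" "{a,w} \<in> tred T"
  shows "a \<in> tvert T \<and> w \<in> tvert T"
proof -
  from tinv_rd[OF assms(1) assms(2)] obtain P Q where
    PQ: "{a,w} = {P,Q} \<and> P \<in> tvert T \<and> Q \<in> tvert T \<and> P \<noteq> Q" by iprover
  from PQ have "(a = P \<and> w = Q) \<or> (a = Q \<and> w = P)" by (metis doubleton_eq_iff)
  then show ?thesis using PQ by auto
qed

lemma tinv_finite:
  assumes "tinv V E T" "finite V"
  shows "finite (tvert T)" "\<And>P. P \<in> tvert T \<Longrightarrow> finite P"
proof -
  have "tvert T \<subseteq> Pow V" using tinv_ne[OF assms(1)] by blast
  then show "finite (tvert T)" using assms(2) finite_subset by blast
  show "\<And>P. P \<in> tvert T \<Longrightarrow> finite P" using tinv_ne[OF assms(1)] assms(2) finite_subset by blast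
qed

lemma union_notin:
  assumes "tinv V E T" "x \<in> tvert T" "y \<in> tvert T" "x \<noteq> y"
  shows "x \<union> y \<notin> tvert T - {x,y}"
proof
  assume a: "x \<union> y \<in> tvert T - {x,y}"
  then have "(x \<union> y) \<inter> x = {}" using tinv_dj[OF assms(1), of "x \<union> y" x] assms(2) by auto
  moreover have "x \<noteq> {}" using tinv_ne[OF assms(1) assms(2)] by simp
  ultimately show False by auto
qed

lemma card_contract:
  assumes "tinv V E T" "finite V" "x \<in> tvert T" "y \<in> tvert T" "x \<noteq> y"
  shows "card (tvert (contract T x y)) = card (tvert T) - 1"
proof -
  have f: "finite (tvert T)" using tinv_finite[OF assms(1,2)] by simp
  have "card (tvert (contract T x y)) = Suc (card (tvert T - {x,y}))"
    unfolding contract_simps using union_notin[OF assms(1,3,4,5)] f by simp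
  also have "card (tvert T - {x,y}) = card (tvert T) - 2"
    using assms(3,4,5) f by (simp add: card_Diff_subset)
  finally show ?thesis
    using assms(3,4,5) f card_mono[OF f, of "{x,y}"] by simp
qed

definition part :: "'a trigraph \<Rightarrow> 'a \<Rightarrow> 'a set" where
  "part T v = (THE P. P \<in> tvert T \<and> v \<in> P)"

lemma part_unique:
  assumes "tinv V E T" "P \<in> tvert T" "v \<in> P"
  shows "part T v = P"
  unfolding part_def
proof (rule the_equality)
  show "P \<in> tvert T \<and> v \<in> P" using assms by simp
  fix Q assume "Q \<in> tvert T \<and> v \<in> Q"
  then show "Q = P" using tinv_dj[OF assms(1), of Q P] assms by blast
qed

lemma part_in:
  assumes "tinv V E T" "v \<in> V"
  shows "part T v \<in> tvert T \<and> v \<in> part T v"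
proof -
  obtain P where "P \<in> tvert T" "v \<in> P" using tinv_un[OF assms(1)] assms(2) by blast
  then show ?thesis using part_unique[OF assms(1)] by simp
qed

lemma part_step:
  assumes "tinv V E T" "x \<in> tvert T" "y \<in> tvert T" "x \<noteq> y" "v \<in> V"
  shows "(part (contract T x y) v = part T v \<and> part T v \<notin> {x,y}) \<or>
         (part (contract T x y) v = x \<union> y \<and> part T v \<in> {x,y})"
proof -
  have I': "tinv V E (contract T x y)" using tinv_contract assms by blast
  have P: "part T v \<in> tvert T" "v \<in> part T v" using part_in[OF assms(1,5)] by auto
  show ?thesis
  proof (cases "part T v \<in> {x,y}")
    case True
    then have "v \<in> x \<union> y" using P by auto
    moreover have "x \<union> y \<in> tvert (contract T x y)" unfolding contract_simps by simp
    ultimately show ?thesis using part_unique[OF I'] True by blast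
  next
    case False
    then have "part T v \<in> tvert (contract T x y)" unfolding contract_simps using P by simp
    then show ?thesis using part_unique[OF I'] False P by blast
  qed
qed

lemma seq_facts:
  assumes "contraction_seq V E d S"
  shows "S \<noteq> []" "S ! 0 = initial_trigraph V E"
    "\<And>k. Suc k < length S \<Longrightarrow> \<exists>x y. x \<in> tvert (S ! k) \<and> y \<in> tvert (S ! k) \<and> x \<noteq> y \<and>
               S ! Suc k = contract (S ! k) x y"
    "card (tvert (last S)) = 1"
    "\<And>T v. T \<in> set S \<Longrightarrow> v \<in> tvert T \<Longrightarrow> red_deg T v \<le> d"
  using assms unfolding contraction_seq_def by auto

lemma seq_inv:
  assumes "graph V E" "contraction_seq V E d S" "k < length S"
  shows "tinv V E (S!k)"
  using assms(3)
proof (induction k)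
  case 0 show ?case using seq_facts(2)[OF assms(2)] tinv_initial[OF assms(1)] by simp
next
  case (Suc k)
  then obtain x y where xy: "x \<in> tvert (S ! k)" "y \<in> tvert (S ! k)" "x \<noteq> y"
      "S ! Suc k = contract (S ! k) x y" using seq_facts(3)[OF assms(2)] by blast
  show ?case using tinv_contract[OF Suc.IH xy(1-3)] xy(4) Suc.prems by simp
qed

lemma part_mono_step:
  assumes "graph V E" "contraction_seq V E d S" "Suc k < length S" "v \<in> V"
  shows "part (S!k) v \<subseteq> part (S!Suc k) v"
proof -
  obtain x y where xy: "x \<in> tvert (S ! k)" "y \<in> tvert (S ! k)" "x \<noteq> y"
      "S ! Suc k = contract (S ! k) x y" using seq_facts(3)[OF assms(2,3)] by blast
  have I: "tinv V E (S!k)" using seq_inv[OF assms(1,2)] assms(3) by simp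
  show ?thesis using part_step[OF I xy(1-3) assms(4)] xy(4) by auto
qed

lemma part_mono:
  assumes "graph V E" "contraction_seq V E d S" "i \<le> j" "j < length S" "v \<in> V"
  shows "part (S!i) v \<subseteq> part (S!j) v"
  using assms(3,4)
proof (induction j)
  case 0 then show ?case by simp
next
  case (Suc j)
  show ?case
  proof (cases "i = Suc j")
    case True then show ?thesis by simp
  next
    case False
    then have "part (S!i) v \<subseteq> part (S!j) v" using Suc by simp
    also have "\<dots> \<subseteq> part (S!Suc j) v" using part_mono_step[OF assms(1,2) Suc.prems(2) assms(5)] .
    finally show ?thesis .
  qed
qed

lemma build_seq:
  assumes "finite V"
  shows "\<And>T. tinv V E T \<Longrightarrow> card (tvert T) = Suc n \<Longrightarrow>
    \<exists>S. S \<noteq> [] \<and> S ! 0 = T \<and>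
     (\<forall>k. Suc k < length S \<longrightarrow>
        (\<exists>x y. x \<in> tvert (S ! k) \<and> y \<in> tvert (S ! k) \<and> x \<noteq> y \<and>
               S ! Suc k = contract (S ! k) x y)) \<and>
     card (tvert (last S)) = 1 \<and> (\<forall>T'\<in>set S. tinv V E T')"
proof (induction n)
  case 0
  show ?case by (rule exI[of _ "[T]"]) (use 0 in auto)
next
  case (Suc n)
  have f: "finite (tvert T)" using tinv_finite[OF Suc.prems(1) assms] by simp
  obtain x where x: "x \<in> tvert T" using Suc.prems(2) by fastforce
  have "card (tvert T - {x}) = Suc n" using x f Suc.prems(2) by simp
  then have "tvert T - {x} \<noteq> {}" by (metis card.empty nat.distinct(1))
  then obtain y where y: "y \<in> tvert T - {x}" by blast
  have xy: "x \<noteq> y" "y \<in> tvert T" using y by auto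
  define T' where "T' = contract T x y"
  have I': "tinv V E T'" unfolding T'_def using tinv_contract[OF Suc.prems(1) x xy(2)] xy by simp
  have "card (tvert T') = Suc n" unfolding T'_def
    using card_contract[OF Suc.prems(1) assms x xy(2) xy(1)] Suc.prems(2) by simp
  from Suc.IH[OF I' this] obtain S' where S': "S' \<noteq> []" "S' ! 0 = T'"
     "\<forall>k. Suc k < length S' \<longrightarrow>
        (\<exists>x y. x \<in> tvert (S' ! k) \<and> y \<in> tvert (S' ! k) \<and> x \<noteq> y \<and>
               S' ! Suc k = contract (S' ! k) x y)"
     "card (tvert (last S')) = 1" "\<forall>T'\<in>set S'. tinv V E T'" by blast
  have steps: "\<forall>k. Suc k < length (T # S') \<longrightarrow>
        (\<exists>x y. x \<in> tvert ((T # S') ! k) \<and> y \<in> tvert ((T # S') ! k) \<and> x \<noteq> y \<and>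
               (T # S') ! Suc k = contract ((T # S') ! k) x y)"
  proof (intro allI impI)
    fix k assume k: "Suc k < length (T # S')"
    show "\<exists>x y. x \<in> tvert ((T # S') ! k) \<and> y \<in> tvert ((T # S') ! k) \<and> x \<noteq> y \<and>
               (T # S') ! Suc k = contract ((T # S') ! k) x y"
    proof (cases k)
      case 0 then show ?thesis using x xy S'(2) unfolding T'_def by auto
    next
      case (Suc k') then show ?thesis using S'(3) k by auto
    qed
  qed
  show ?case
    by (rule exI[of _ "T # S'"]) (use S' steps Suc.prems(1) in auto)
qed

lemma red_deg_bound:
  assumes "tinv V E T" "finite V"
  shows "red_deg T v \<le> card (Pow (Pow V))"
proof -
  have "{e \<in> tred T. v \<in> e} \<subseteq> Pow (Pow V)"
  proof
    fix e assume "e \<in> {e \<in> tred T. v \<in> e}"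
    then obtain P Q where "e = {P,Q} \<and> P \<in> tvert T \<and> Q \<in> tvert T"
      using tinv_rd[OF assms(1)] by blast
    then show "e \<in> Pow (Pow V)" using tinv_ne[OF assms(1)] by auto
  qed
  then show ?thesis unfolding red_deg_def using assms(2) by (simp add: card_mono)
qed

lemma exists_seq:
  assumes "graph V E" "V \<noteq> {}"
  shows "\<exists>d S. contraction_seq V E d S"
proof -
  have fin: "finite V" using assms(1) unfolding graph_def by simp
  have I0: "tinv V E (initial_trigraph V E)" using tinv_initial[OF assms(1)] .
  have "card (tvert (initial_trigraph V E)) = card V"
    by (simp add: initial_trigraph_def tvert_def card_image)
  then have "card (tvert (initial_trigraph V E)) = Suc (card V - 1)"
    using assms(2) fin by (simp add: card_gt_0_iff)
  from build_seq[OF fin I0 this] obtain S where S: "S \<noteq> []" "S ! 0 = initial_trigraph V E"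
     "\<forall>k. Suc k < length S \<longrightarrow>
        (\<exists>x y. x \<in> tvert (S ! k) \<and> y \<in> tvert (S ! k) \<and> x \<noteq> y \<and>
               S ! Suc k = contract (S ! k) x y)"
     "card (tvert (last S)) = 1" "\<forall>T'\<in>set S. tinv V E T'" by blast
  have "contraction_seq V E (card (Pow (Pow V))) S"
    unfolding contraction_seq_def using S red_deg_bound fin by blast
  then show ?thesis by blast
qed


section \<open>Biclique\<close>

lemma bic_bound:
  assumes "finite V"
  shows "\<And>y. (\<exists>A B. A \<subseteq> V \<and> B \<subseteq> V \<and> A \<inter> B = {} \<and>
      card A = y \<and> card B = y \<and> (\<forall>a\<in>A. \<forall>b\<in>B. {a, b} \<in> E)) \<Longrightarrow> y \<le> card V"
  using assms card_mono by blast

lemma bic_le: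
  assumes "finite V" "A \<subseteq> V" "B \<subseteq> V" "A \<inter> B = {}" "card A = m" "card B = m" "cmpl E A B"
  shows "m \<le> biclique_num V E"
  unfolding biclique_num_def
proof (rule Greatest_le_nat[where b="card V"])
  show "\<exists>Aa Ba. Aa \<subseteq> V \<and> Ba \<subseteq> V \<and> Aa \<inter> Ba = {} \<and> card Aa = m \<and> card Ba = m \<and> (\<forall>a\<in>Aa. \<forall>b\<in>Ba. {a, b} \<in> E)"
    using assms unfolding cmpl_def by blast
  show "\<And>y. (\<exists>A B. A \<subseteq> V \<and> B \<subseteq> V \<and> A \<inter> B = {} \<and> card A = y \<and> card B = y \<and> (\<forall>a\<in>A. \<forall>b\<in>B. {a, b} \<in> E)) \<Longrightarrow> y \<le> card V"
    by (rule bic_bound[OF assms(1)])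
qed

lemma bic_ex:
  assumes "finite V"
  shows "\<exists>A B. A \<subseteq> V \<and> B \<subseteq> V \<and> A \<inter> B = {} \<and>
      card A = biclique_num V E \<and> card B = biclique_num V E \<and> (\<forall>a\<in>A. \<forall>b\<in>B. {a, b} \<in> E)"
  unfolding biclique_num_def
proof (rule GreatestI_nat[where k=0 and b="card V"])
  show "\<exists>A B. A \<subseteq> V \<and> B \<subseteq> V \<and> A \<inter> B = {} \<and> card A = 0 \<and> card B = 0 \<and> (\<forall>a\<in>A. \<forall>b\<in>B. {a, b} \<in> E)"
    by (rule exI[of _ "{}"], rule exI[of _ "{}"]) simp
  show "\<And>y. (\<exists>A B. A \<subseteq> V \<and> B \<subseteq> V \<and> A \<inter> B = {} \<and> card A = y \<and> card B = y \<and> (\<forall>a\<in>A. \<forall>b\<in>B. {a, b} \<in> E)) \<Longrightarrow> y \<le> card V"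
    by (rule bic_bound[OF assms(1)])
qed

lemma big_cmpl:
  assumes "finite V" "cmpl E P U" "P \<inter> U = {}" "P \<subseteq> V" "U \<subseteq> V" "biclique_num V E < card P"
  shows "card U \<le> biclique_num V E"
proof (rule ccontr)
  let ?s = "biclique_num V E"
  assume "\<not> card U \<le> ?s"
  then have cu: "Suc ?s \<le> card U" by simp
  have cp: "Suc ?s \<le> card P" using assms(6) by simp
  have fU: "finite U" "finite P" using assms(1,4,5) finite_subset by auto
  obtain A where A: "A \<subseteq> P" "card A = Suc ?s" using obtain_subset_with_card_n[OF cp] by blast
  obtain B where B: "B \<subseteq> U" "card B = Suc ?s" using obtain_subset_with_card_n[OF cu] by blast
  have "cmpl E A B" using assms(2) A B unfolding cmpl_def by blast
  moreover have "A \<inter> B = {}" using assms(3) A B by blast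
  ultimately have "Suc ?s \<le> ?s" using bic_le[OF assms(1), of A B "Suc ?s" E] A B assms(4,5) by blast
  then show False by simp
qed

section \<open>Balls in bounded degree graphs\<close>

fun rch :: "('b \<Rightarrow> 'b set) \<Rightarrow> 'b \<Rightarrow> nat \<Rightarrow> 'b set" where
  "rch N z 0 = {z}"
| "rch N z (Suc j) = rch N z j \<union> \<Union>(N ` rch N z j)"

declare rch.simps(2)[simp del]

lemma rch_Suc_iff: "Q \<in> rch N z (Suc j) \<longleftrightarrow> Q \<in> rch N z j \<or> (\<exists>P\<in>rch N z j. Q \<in> N P)"
  by (simp add: rch.simps(2))

lemma rch_mono: "i \<le> j \<Longrightarrow> rch N z i \<subseteq> rch N z j"
proof (induction j)
  case 0 then show ?case by simp
next
  case (Suc j)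
  show ?case
  proof (cases "i = Suc j")
    case True then show ?thesis by simp
  next
    case False then have "rch N z i \<subseteq> rch N z j" using Suc by simp
    moreover have "rch N z j \<subseteq> rch N z (Suc j)" by (simp add: rch.simps(2))
    ultimately show ?thesis by (rule subset_trans)
  qed
qed

lemma rch_step: "P \<in> rch N z j \<Longrightarrow> Q \<in> N P \<Longrightarrow> Q \<in> rch N z (Suc j)"
  by (auto simp: rch.simps(2))

lemma rch_finite:
  assumes "\<And>P. finite (N P)"
  shows "finite (rch N z j)"
proof (induction j)
  case 0 then show ?case by simp
next
  case (Suc j) then show ?case using assms by (simp add: rch.simps(2))
qed

lemma rch_card:
  assumes fin: "\<And>P. finite (N P)" and deg: "\<And>P. card (N P) \<le> d"
    and sym: "\<And>P Q. Q \<in> N P \<Longrightarrow> P \<in> N Q"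
  shows "card (rch N z j) \<le> 1 + d * (\<Sum>i<j. (d-1)^i)"
proof -
  define D where "D i = rch N z (Suc i) - rch N z i" for i
  have fr: "\<And>j. finite (rch N z j)" by (rule rch_finite[OF fin])
  have D0: "card (D 0) \<le> d"
  proof -
    have "D 0 \<subseteq> N z" unfolding D_def using rch_Suc_iff[of _ N z 0] by auto
    then have "card (D 0) \<le> card (N z)" by (rule card_mono[OF fin])
    then show ?thesis using deg[of z] by linarith
  qed
  have DS: "card (D (Suc i)) \<le> (d-1) * card (D i)" for i
  proof -
    have sub: "D (Suc i) \<subseteq> (\<Union>P\<in>D i. N P - rch N z (Suc i))"
    proof
      fix Q assume Q: "Q \<in> D (Suc i)"
      then have Q1: "Q \<in> rch N z (Suc (Suc i))" "Q \<notin> rch N z (Suc i)" unfolding D_def by auto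
      then obtain P where P: "P \<in> rch N z (Suc i)" "Q \<in> N P" using rch_Suc_iff[of Q N z "Suc i"] by blast
      have "P \<notin> rch N z i"
      proof
        assume "P \<in> rch N z i"
        then have "Q \<in> rch N z (Suc i)" by (rule rch_step) (rule P(2))
        then show False using Q1 by blast
      qed
      then have "P \<in> D i" using P(1) unfolding D_def by blast
      then show "Q \<in> (\<Union>P\<in>D i. N P - rch N z (Suc i))" using P Q1 by blast
    qed
    have each: "card (N P - rch N z (Suc i)) \<le> d - 1" if P: "P \<in> D i" for P
    proof -
      from P have "P \<in> rch N z (Suc i)" "P \<notin> rch N z i" unfolding D_def by auto
      then obtain P' where P': "P' \<in> rch N z i" "P \<in> N P'" using rch_Suc_iff[of P N z i] by blast
      have "P' \<in> N P" using sym[OF P'(2)] .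
      moreover have "P' \<in> rch N z (Suc i)" using P'(1) rch_mono[of i "Suc i" N z] by auto
      ultimately have "N P - rch N z (Suc i) \<subseteq> N P - {P'}" by auto
      then have "card (N P - rch N z (Suc i)) \<le> card (N P - {P'})"
        using fin by (simp add: card_mono)
      also have "\<dots> = card (N P) - 1" using \<open>P' \<in> N P\<close> fin by simp
      also have "\<dots> \<le> d - 1" using deg[of P] by simp
      finally show ?thesis .
    qed
    have fD: "finite (D i)" unfolding D_def using fr by simp
    have "card (D (Suc i)) \<le> card (\<Union>P\<in>D i. N P - rch N z (Suc i))"
      using sub fD fin by (intro card_mono) auto
    also have "\<dots> \<le> (\<Sum>P\<in>D i. card (N P - rch N z (Suc i)))"
      using card_UN_le[OF fD] by blast
    also have "\<dots> \<le> (\<Sum>P\<in>D i. d - 1)" using each by (intro sum_mono) auto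
    also have "\<dots> = (d - 1) * card (D i)" by simp
    finally show ?thesis .
  qed
  have Dle: "card (D i) \<le> d * (d-1)^i" for i
  proof (induction i)
    case 0 then show ?case using D0 by simp
  next
    case (Suc i)
    have "card (D (Suc i)) \<le> (d-1) * card (D i)" using DS .
    also have "\<dots> \<le> (d-1) * (d * (d-1)^i)" using Suc.IH by simp
    also have "\<dots> = d * (d-1)^Suc i" by simp
    finally show ?case .
  qed
  have "card (rch N z j) = 1 + (\<Sum>i<j. card (D i))"
  proof (induction j)
    case 0 then show ?case by simp
  next
    case (Suc j)
    have eq: "rch N z (Suc j) = rch N z j \<union> D j" unfolding D_def using rch_mono[of j "Suc j" N z] by auto
    have dis: "rch N z j \<inter> D j = {}" unfolding D_def by auto
    have fD: "finite (D j)" unfolding D_def using fr by simp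
    have "card (rch N z (Suc j)) = card (rch N z j \<union> D j)" using eq by simp
    also have "\<dots> = card (rch N z j) + card (D j)" using card_Un_disjoint[OF fr fD dis] .
    finally have "card (rch N z (Suc j)) = card (rch N z j) + card (D j)" .
    then show ?case using Suc.IH by simp
  qed
  also have "\<dots> \<le> 1 + (\<Sum>i<j. d * (d-1)^i)" using Dle by (simp add: sum_mono)
  also have "\<dots> = 1 + d * (\<Sum>i<j. (d-1)^i)" by (simp add: sum_distrib_left)
  finally show ?thesis .
qed


lemma nred_card:
  assumes I: "tinv V E T" and fin: "finite V" and deg: "\<And>P. P \<in> tvert T \<Longrightarrow> red_deg T P \<le> d"
  shows "finite {Q. {P,Q} \<in> tred T}" "card {Q. {P,Q} \<in> tred T} \<le> d"
proof -
  let ?N = "{Q. {P,Q} \<in> tred T}"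
  have inj: "inj_on (\<lambda>Q. {P,Q}) ?N"
  proof
    fix Q1 Q2 assume "Q1 \<in> ?N" "Q2 \<in> ?N" and eq: "{P,Q1} = {P,Q2}"
    from eq have "(P = P \<and> Q1 = Q2) \<or> (P = Q2 \<and> Q1 = P)" by (rule doubleton_eq_iff[THEN iffD1])
    then show "Q1 = Q2" by auto
  qed
  have sub: "(\<lambda>Q. {P,Q}) ` ?N \<subseteq> {e \<in> tred T. P \<in> e}" by auto
  have ftr: "finite (tred T)"
  proof -
    have "tred T \<subseteq> Pow (Pow V)"
    proof
      fix e assume "e \<in> tred T"
      then obtain P Q where "e = {P,Q} \<and> P \<in> tvert T \<and> Q \<in> tvert T"
        using tinv_rd[OF I] by blast
      then show "e \<in> Pow (Pow V)" using tinv_ne[OF I] by auto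
    qed
    then show ?thesis using fin finite_subset by blast
  qed
  have fe: "finite {e \<in> tred T. P \<in> e}" using ftr by simp
  have "finite ((\<lambda>Q. {P,Q}) ` ?N)" using finite_subset[OF sub fe] .
  then show fN: "finite ?N" using finite_imageD[OF _ inj] by blast
  show "card ?N \<le> d"
  proof (cases "P \<in> tvert T")
    case True
    have "card ?N = card ((\<lambda>Q. {P,Q}) ` ?N)" using card_image[OF inj] by simp
    also have "\<dots> \<le> card {e \<in> tred T. P \<in> e}" using card_mono[OF fe sub] .
    also have "\<dots> \<le> d" using deg[OF True] unfolding red_deg_def .
    finally show ?thesis .
  next
    case False
    have "?N = {}"
    proof (rule ccontr)
      assume "?N \<noteq> {}"
      then obtain Q where "{P,Q} \<in> tred T" by blast
      then show False using tinv_red_in[OF I] False by blast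
    qed
    then show ?thesis by simp
  qed
qed

lemma main_bound:
  assumes G: "graph V E" and En: "E \<noteq> {}" and r: "r \<ge> 1" and CS: "contraction_seq V E d S"
  shows "scol V E r \<le> (3 + d * (\<Sum>i<r. (d-1)^i)) * biclique_num V E"
proof -
  define s where "s = biclique_num V E"
  define Bd where "Bd = (3 + d * (\<Sum>i<r. (d-1)^i)) * s"
  have fin: "finite V" using G unfolding graph_def by simp
  obtain e where "e \<in> E" using En by blast
  then obtain a b where ab: "e = {a,b}" "a \<noteq> b" "a \<in> V" "b \<in> V"
    using G unfolding graph_def by blast
  have "{a,b} \<in> E" using ab \<open>e \<in> E\<close> by simp
  then have "cmpl E {a} {b}" unfolding cmpl_def by simp
  then have s1: "1 \<le> s" unfolding s_def using bic_le[OF fin, of "{a}" "{b}" 1 E] ab by simp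
  have Vbig: "s < card V"
  proof -
    obtain A B where AB: "A \<subseteq> V" "B \<subseteq> V" "A \<inter> B = {}" "card A = s" "card B = s"
      using bic_ex[OF fin, of E] unfolding s_def by blast
    have fA: "finite A" "finite B" using AB fin finite_subset by auto
    have "card (A \<union> B) = card A + card B" by (rule card_Un_disjoint[OF fA AB(3)])
    then have "card (A \<union> B) = s + s" using AB(4,5) by simp
    moreover have "card (A \<union> B) \<le> card V" using AB fin by (simp add: card_mono)
    ultimately show ?thesis using s1 by simp
  qed
  have Vne: "V \<noteq> {}" using ab by auto
  define len where "len = length S"
  define pt where "pt k v = part (S!k) v" for k v
  have Inv: "\<And>k. k < len \<Longrightarrow> tinv V E (S!k)" using seq_inv[OF G CS] unfolding len_def by blast
  have ptin: "\<And>k v. k < len \<Longrightarrow> v \<in> V \<Longrightarrow> pt k v \<in> tvert (S!k) \<and> v \<in> pt k v"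
  proof -
    fix k v assume k: "k < len" and v: "v \<in> V"
    show "pt k v \<in> tvert (S!k) \<and> v \<in> pt k v" unfolding pt_def by (rule part_in[OF Inv[OF k] v])
  qed
  have ptsub: "\<And>k v. k < len \<Longrightarrow> v \<in> V \<Longrightarrow> pt k v \<subseteq> V \<and> finite (pt k v)"
  proof -
    fix k v assume k: "k < len" and v: "v \<in> V"
    have "pt k v \<in> tvert (S!k)" using ptin[OF k v] by simp
    then have "pt k v \<subseteq> V" using tinv_ne[OF Inv[OF k]] by simp
    then show "pt k v \<subseteq> V \<and> finite (pt k v)" using fin finite_subset by blast
  qed
  have lenpos: "0 < len" using seq_facts(1)[OF CS] unfolding len_def by simp
  have ptlast: "\<And>v. v \<in> V \<Longrightarrow> pt (len - 1) v = V"
  proof -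
    fix v assume v: "v \<in> V"
    have l: "last S = S ! (len - 1)" unfolding len_def using seq_facts(1)[OF CS] by (simp add: last_conv_nth)
    have IL: "tinv V E (S ! (len - 1))" using Inv lenpos by simp
    from seq_facts(4)[OF CS] l have "card (tvert (S ! (len - 1))) = 1" by simp
    then obtain P where P: "tvert (S ! (len - 1)) = {P}" by (rule card_1_singletonE)
    then have "P = V" using tinv_un[OF IL] by simp
    then show "pt (len - 1) v = V" unfolding pt_def using part_unique[OF IL, of P v] P v by simp
  qed
  define \<tau> where "\<tau> v = (LEAST k. k < len \<and> s < card (pt k v))" for v
  have \<tau>1: "\<And>v. v \<in> V \<Longrightarrow> \<tau> v < len \<and> s < card (pt (\<tau> v) v)"
  proof -
    fix v assume v: "v \<in> V"
    have "len - 1 < len \<and> s < card (pt (len - 1) v)" using ptlast[OF v] Vbig lenpos by simp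
    then show "\<tau> v < len \<and> s < card (pt (\<tau> v) v)" unfolding \<tau>_def by (rule LeastI)
  qed
  have \<tau>2: "\<And>v k. k < len \<Longrightarrow> s < card (pt k v) \<Longrightarrow> \<tau> v \<le> k"
    unfolding \<tau>_def by (simp add: Least_le)
  have \<tau>3: "\<And>v k. v \<in> V \<Longrightarrow> k < \<tau> v \<Longrightarrow> card (pt k v) \<le> s"
  proof -
    fix v k assume v: "v \<in> V" and k: "k < \<tau> v"
    have "\<not> (k < len \<and> s < card (pt k v))" using not_less_Least[OF k[unfolded \<tau>_def]] .
    moreover have "k < len" using k \<tau>1[OF v] by simp
    ultimately show "card (pt k v) \<le> s" by simp
  qed
  have big: "\<And>w k. w \<in> V \<Longrightarrow> \<tau> w \<le> k \<Longrightarrow> k < len \<Longrightarrow> s < card (pt k w)"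
  proof -
    fix w k assume w: "w \<in> V" and k: "\<tau> w \<le> k" "k < len"
    have "pt (\<tau> w) w \<subseteq> pt k w" unfolding pt_def using part_mono[OF G CS k(1) _ w] k(2) unfolding len_def by simp
    then have "card (pt (\<tau> w) w) \<le> card (pt k w)" using ptsub[OF k(2) w] by (simp add: card_mono)
    then show "s < card (pt k w)" using \<tau>1[OF w] by simp
  qed
  have \<tau>pos: "\<And>v. v \<in> V \<Longrightarrow> 0 < \<tau> v"
  proof (rule ccontr)
    fix v assume v: "v \<in> V" and "\<not> 0 < \<tau> v"
    then have t0: "\<tau> v = 0" by simp
    have I0: "tinv V E (S!0)" using Inv lenpos by simp
    have "{v} \<in> tvert (S!0)" using seq_facts(2)[OF CS] v by (simp add: initial_trigraph_def tvert_def)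
    then have "pt 0 v = {v}" unfolding pt_def using part_unique[OF I0] by simp
    then show False using \<tau>1[OF v] t0 s1 by simp
  qed
  obtain xs where xs: "set xs = V" "distinct xs" using finite_distinct_list[OF fin] by blast
  define L where "L = rev (sort_key \<tau> xs)"
  have Llin: "linord V L" unfolding linord_def L_def using xs by simp
  have Lsort: "sorted_wrt (\<lambda>a b. \<tau> b \<le> \<tau> a) L"
  proof -
    have "sorted_wrt (\<lambda>a b. \<tau> a \<le> \<tau> b) (sort_key \<tau> xs)" using sorted_sort_key[of \<tau> xs] unfolding sorted_map .
    then show ?thesis unfolding L_def sorted_wrt_rev .
  qed
  have ole: "\<And>u v. ord_le L u v \<Longrightarrow> \<tau> v \<le> \<tau> u"
  proof -
    fix u v assume "ord_le L u v"
    then obtain i j where ij: "i \<le> j" "j < length L" "L ! i = u" "L ! j = v" unfolding ord_le_def by blast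
    show "\<tau> v \<le> \<tau> u"
    proof (cases "i = j")
      case True then show ?thesis using ij by simp
    next
      case False then have "i < j" using ij by simp
      then have "\<tau> (L ! j) \<le> \<tau> (L ! i)" using sorted_wrt_nth_less[OF Lsort _ ij(2)] by blast
      then show ?thesis using ij by simp
    qed
  qed
  have olt: "\<And>u v. ord_less L v u \<Longrightarrow> \<tau> u \<le> \<tau> v"
  proof -
    fix u v assume "ord_less L v u"
    then obtain i j where ij: "i < j" "j < length L" "L ! i = v" "L ! j = u" unfolding ord_less_def by blast
    then show "\<tau> u \<le> \<tau> v" using sorted_wrt_nth_less[OF Lsort ij(1) ij(2)] by simp
  qed
  have key: "card (Sreach V E r L v) \<le> Bd" if v: "v \<in> V" for v
  proof -
    define k0 where "k0 = \<tau> v"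
    define k' where "k' = k0 - 1"
    have k0: "k0 = Suc k'" "k0 < len" using \<tau>pos[OF v] \<tau>1[OF v] unfolding k0_def k'_def by auto
    define T where "T = S ! k0"
    define T' where "T' = S ! k'"
    have IT: "tinv V E T" unfolding T_def using Inv k0 by simp
    have IT': "tinv V E T'" unfolding T'_def using Inv k0 by simp
    obtain x y where xy: "x \<in> tvert T'" "y \<in> tvert T'" "x \<noteq> y" "T = contract T' x y"
      using seq_facts(3)[OF CS, of k'] k0 unfolding T_def T'_def len_def by auto
    have degT: "\<And>P. P \<in> tvert T \<Longrightarrow> red_deg T P \<le> d"
    proof -
      fix P assume "P \<in> tvert T"
      moreover have "T \<in> set S" unfolding T_def using k0 unfolding len_def by simp
      ultimately show "red_deg T P \<le> d" using seq_facts(5)[OF CS] by blast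
    qed
    have ptT: "\<And>w. w \<in> V \<Longrightarrow> pt k0 w \<in> tvert T \<and> w \<in> pt k0 w" using ptin[OF k0(2)] unfolding T_def by blast
    have ptT': "\<And>w. w \<in> V \<Longrightarrow> pt k' w = part T' w" unfolding pt_def T'_def by simp
    have ptTe: "\<And>w. pt k0 w = part T w" unfolding pt_def T_def by simp
    define z where "z = pt k0 v"
    have zbig: "s < card z" unfolding z_def k0_def using \<tau>1[OF v] by simp
    have zin: "z \<in> tvert T" using ptT[OF v] unfolding z_def by simp
    define N where "N P = {Q. {P,Q} \<in> tred T}" for P
    define BS where "BS P = \<Union>{Q \<in> tvert T. card Q \<le> s \<and> {P,Q} \<in> tblack T}" for P
    define C where "C Q = (if s < card Q then BS Q else Q)" for Q
    define SXY where "SXY = {w \<in> V. card (pt k' w) \<le> s \<and> s < card (pt k0 w)}"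
    define X where "X = rch N z r - {z}"
    have finN: "\<And>P. finite (N P)" unfolding N_def using nred_card(1)[OF IT fin degT] by blast
    have degN: "\<And>P. card (N P) \<le> d" unfolding N_def using nred_card(2)[OF IT fin degT] by blast
    have symN: "\<And>P Q. Q \<in> N P \<Longrightarrow> P \<in> N Q" unfolding N_def by (simp add: insert_commute)
    have NT: "\<And>P. N P \<subseteq> tvert T" unfolding N_def using tinv_red_in[OF IT] by blast
    have rchT: "rch N z j \<subseteq> tvert T" for j
    proof (induction j)
      case 0 then show ?case using zin by simp
    next
      case (Suc j)
      show ?case
      proof
        fix Q assume "Q \<in> rch N z (Suc j)"
        then have "Q \<in> rch N z j \<or> (\<exists>P\<in>rch N z j. Q \<in> N P)" by (simp only: rch_Suc_iff)
        then show "Q \<in> tvert T" using Suc.IH NT by blast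
      qed
    qed
    have partV: "\<And>P. P \<in> tvert T \<Longrightarrow> P \<subseteq> V \<and> finite P"
      using tinv_ne[OF IT] fin finite_subset by blast
    have BSb: "card (BS P) \<le> s \<and> BS P \<subseteq> V" if P: "P \<in> tvert T" "s < card P" for P
    proof -
      have sub: "BS P \<subseteq> V" unfolding BS_def using partV by blast
      have cm: "cmpl E P (BS P)"
        unfolding cmpl_def
      proof (intro ballI)
        fix a b assume a: "a \<in> P" and b: "b \<in> BS P"
        then obtain Q where Q: "Q \<in> tvert T" "{P,Q} \<in> tblack T" "b \<in> Q" unfolding BS_def by blast
        have "cmpl E P Q" using tinv_black_cmpl[OF IT Q(2)] by simp
        then show "{a,b} \<in> E" using a Q(3) unfolding cmpl_def by blast
      qed
      have dj: "P \<inter> BS P = {}"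
      proof -
        have "\<And>Q. Q \<in> tvert T \<Longrightarrow> {P,Q} \<in> tblack T \<Longrightarrow> P \<inter> Q = {}"
        proof -
          fix Q assume Q: "Q \<in> tvert T" "{P,Q} \<in> tblack T"
          then have "P \<noteq> Q" using tinv_black_cmpl[OF IT Q(2)] by simp
          then show "P \<inter> Q = {}" using tinv_dj[OF IT P(1) Q(1)] by simp
        qed
        then show ?thesis unfolding BS_def by blast
      qed
      have "card (BS P) \<le> biclique_num V E"
        by (rule big_cmpl[OF fin cm dj]) (use partV[OF P(1)] sub P(2) in \<open>simp_all add: s_def\<close>)
      then show ?thesis using sub unfolding s_def by simp
    qed
    have Cb: "card (C Q) \<le> s \<and> C Q \<subseteq> V" if Q: "Q \<in> tvert T" for Q
    proof (cases "s < card Q")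
      case True then show ?thesis unfolding C_def using BSb[OF Q True] by simp
    next
      case False then show ?thesis unfolding C_def using partV[OF Q] by simp
    qed
    have XT: "X \<subseteq> tvert T" unfolding X_def using rchT by blast
    have finX: "finite X" unfolding X_def using rch_finite[OF finN] by simp
    have cardX: "card X \<le> d * (\<Sum>i<r. (d-1)^i)"
    proof -
      have "z \<in> rch N z r" using rch_mono[of 0 r N z] by simp
      then have "card X = card (rch N z r) - 1" unfolding X_def using rch_finite[OF finN] by simp
      moreover have "card (rch N z r) \<le> 1 + d * (\<Sum>i<r. (d-1)^i)"
        by (rule rch_card[where N=N and d=d], rule finN, rule degN, erule symN)
      ultimately show ?thesis by simp
    qed
    have SXYb: "card SXY \<le> 2 * s \<and> SXY \<subseteq> V"
    proof -
      define X1 where "X1 = (if card x \<le> s then x else {})"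
      define Y1 where "Y1 = (if card y \<le> s then y else {})"
      have IT'f: "finite x" "finite y" using tinv_finite(2)[OF IT' fin] xy by auto
      have "card X1 \<le> s" "card Y1 \<le> s" unfolding X1_def Y1_def by auto
      have sub: "SXY \<subseteq> X1 \<union> Y1"
      proof
        fix w assume w: "w \<in> SXY"
        then have wV: "w \<in> V" and c1: "card (pt k' w) \<le> s" and c2: "s < card (pt k0 w)" unfolding SXY_def by auto
        have ne: "part T w \<noteq> part T' w" using c1 c2 ptT'[OF wV] ptTe[of w] by auto
        have "part T' w \<in> {x,y}" using part_step[OF IT' xy(1-3) wV] ne xy(4) by auto
        moreover have "w \<in> part T' w" using part_in[OF IT' wV] by simp
        moreover have "card (part T' w) \<le> s" using c1 ptT'[OF wV] by simp
        ultimately show "w \<in> X1 \<union> Y1" unfolding X1_def Y1_def by auto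
      qed
      have "card SXY \<le> card (X1 \<union> Y1)" using sub IT'f unfolding X1_def Y1_def by (intro card_mono) auto
      also have "\<dots> \<le> card X1 + card Y1" by (rule card_Un_le)
      also have "\<dots> \<le> 2 * s" using \<open>card X1 \<le> s\<close> \<open>card Y1 \<le> s\<close> by simp
      finally show ?thesis unfolding SXY_def by auto
    qed
    have edge: "{pt k0 a, pt k0 b} \<in> tblack T \<union> tred T"
      if ab: "a \<in> V" "b \<in> V" "{a,b} \<in> E" "pt k0 a \<noteq> pt k0 b" for a b
    proof -
      have "adjs E (pt k0 a) (pt k0 b)" unfolding adjs_def using ptT[OF ab(1)] ptT[OF ab(2)] ab(3) by blast
      then show ?thesis using tinv_ad[OF IT] ptT[OF ab(1)] ptT[OF ab(2)] ab(4) by blast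
    qed
    have nobb: "{P,Q} \<notin> tblack T" if PQ: "P \<in> tvert T" "Q \<in> tvert T" "s < card P" "s < card Q" for P Q
    proof
      assume b: "{P,Q} \<in> tblack T"
      then have c: "cmpl E P Q" "P \<noteq> Q" using tinv_black_cmpl[OF IT] by blast+
      have "P \<inter> Q = {}" using tinv_dj[OF IT PQ(1,2) c(2)] .
      then have "card Q \<le> biclique_num V E"
        using big_cmpl[OF fin c(1)] partV[OF PQ(1)] partV[OF PQ(2)] PQ(3) unfolding s_def by blast
      then show False using PQ(4) unfolding s_def by simp
    qed
    have incl: "Sreach V E r L v \<subseteq> SXY \<union> BS z \<union> (\<Union>Q\<in>X. C Q)"
    proof
      fix u assume uS: "u \<in> Sreach V E r L v"
      have uS': "u \<in> V \<and> ord_le L u v \<and>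
         (\<exists>ps. is_path V E ps \<and> hd ps = v \<and> last ps = u \<and> length ps - 1 \<le> r \<and>
          (\<forall>i. 0 < i \<and> i < length ps - 1 \<longrightarrow> ord_less L v (ps ! i)))"
        using uS unfolding Sreach_def mem_Collect_eq .
      then have uV: "u \<in> V" and ule: "ord_le L u v" by simp_all
      from uS' obtain ps where ps: "is_path V E ps" "hd ps = v" "last ps = u" "length ps - 1 \<le> r"
          "\<forall>i. 0 < i \<and> i < length ps - 1 \<longrightarrow> ord_less L v (ps ! i)" by iprover
      have \<tau>u: "k0 \<le> \<tau> u" using ole[OF ule] unfolding k0_def .
      define m where "m = length ps - 1"
      have psne: "ps \<noteq> []" and psV: "set ps \<subseteq> V"
        and edges: "\<And>i. Suc i < length ps \<Longrightarrow> {ps!i, ps!Suc i} \<in> E"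
        using ps(1) unfolding is_path_def by auto
      have lenm: "length ps = Suc m" unfolding m_def using psne by simp
      have ps0: "ps!0 = v" using ps(2) psne by (simp add: hd_conv_nth)
      have psm: "ps!m = u" using ps(3) psne unfolding m_def by (simp add: last_conv_nth)
      have psiV: "\<And>i. i \<le> m \<Longrightarrow> ps!i \<in> V" using psV lenm nth_mem by (metis less_Suc_eq_le subsetD)
      have mr: "m \<le> r" using ps(4) unfolding m_def .
      show "u \<in> SXY \<union> BS z \<union> (\<Union>Q\<in>X. C Q)"
      proof (cases "s < card (pt k0 u)")
        case True
        then have "\<tau> u \<le> k0" using \<tau>2 k0(2) by blast
        then have "\<tau> u = k0" using \<tau>u by simp
        then have "card (pt k' u) \<le> s" using \<tau>3[OF uV, of k'] k0(1) by simp
        then have "u \<in> SXY" unfolding SXY_def using uV True by simp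
        then show ?thesis by blast
      next
        case False
        have unv: "u \<noteq> v" using False zbig unfolding z_def by auto
        have m0: "0 < m"
        proof (rule ccontr)
          assume "\<not> 0 < m"
          then have "m = 0" by simp
          then show False using ps0 psm unv by simp
        qed
        have inner: "s < card (pt k0 (ps!i))" if i: "0 < i" "i < m" for i
        proof -
          have "ord_less L v (ps ! i)" using ps(5) i unfolding m_def by blast
          then have "\<tau> (ps!i) \<le> k0" using olt unfolding k0_def by blast
          then show ?thesis using big[OF psiV[of i] _ k0(2)] i by simp
        qed
        have walk: "pt k0 (ps!i) \<in> rch N z i \<and> s < card (pt k0 (ps!i))" if "i < m" for i
          using that
        proof (induction i)
          case 0 then show ?case using ps0 zbig unfolding z_def by simp
        next
          case (Suc i)
          have IH: "pt k0 (ps!i) \<in> rch N z i" "s < card (pt k0 (ps!i))" using Suc by simp_all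
          have Qb: "s < card (pt k0 (ps!Suc i))" using inner[of "Suc i"] Suc.prems by simp
          have iV: "ps!i \<in> V" "ps!Suc i \<in> V" using psiV Suc.prems by simp_all
          have e: "{ps!i, ps!Suc i} \<in> E" using edges[of i] Suc.prems lenm by simp
          show ?case
          proof (cases "pt k0 (ps!i) = pt k0 (ps!Suc i)")
            case True
            then show ?thesis using IH(1) rch_mono[of i "Suc i" N z] Qb by auto
          next
            case False
            have "{pt k0 (ps!i), pt k0 (ps!Suc i)} \<in> tblack T \<union> tred T" using edge[OF iV e False] .
            moreover have "{pt k0 (ps!i), pt k0 (ps!Suc i)} \<notin> tblack T"
              using nobb ptT[OF iV(1)] ptT[OF iV(2)] IH(2) Qb by blast
            ultimately have "pt k0 (ps!Suc i) \<in> N (pt k0 (ps!i))" unfolding N_def by simp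
            then have "pt k0 (ps!Suc i) \<in> rch N z (Suc i)" using rch_step[OF IH(1)] by blast
            then show ?thesis using Qb by simp
          qed
        qed
        define P where "P = pt k0 (ps!(m-1))"
        define Q where "Q = pt k0 u"
        have Pw: "P \<in> rch N z (m-1)" "s < card P" using walk[of "m-1"] m0 unfolding P_def by simp_all
        have Qs: "card Q \<le> s" using False unfolding Q_def by simp
        have PQ: "P \<noteq> Q" using Pw(2) Qs by auto
        have mV: "ps!(m-1) \<in> V" using psiV by simp
        have eu: "{ps!(m-1), u} \<in> E" using edges[of "m-1"] m0 lenm psm by simp
        have PT: "P \<in> tvert T" using ptT[OF mV] unfolding P_def by simp
        have QT: "Q \<in> tvert T" "u \<in> Q" using ptT[OF uV] unfolding Q_def by simp_all
        have bb: "{P,Q} \<in> tblack T \<union> tred T" using edge[OF mV uV eu] PQ unfolding P_def Q_def by simp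
        have "m - 1 \<le> r" using mr by simp
        then have Pr: "P \<in> rch N z r" using Pw(1) rch_mono[of "m-1" r N z] by blast
        show ?thesis
        proof (cases "{P,Q} \<in> tblack T")
          case True
          have "u \<in> BS P" unfolding BS_def using QT Qs True by blast
          show ?thesis
          proof (cases "P = z")
            case True then show ?thesis using \<open>u \<in> BS P\<close> by simp
          next
            case False
            then have "P \<in> X" unfolding X_def using Pr by simp
            moreover have "C P = BS P" unfolding C_def using Pw(2) by simp
            ultimately show ?thesis using \<open>u \<in> BS P\<close> by blast
          qed
        next
          case False
          then have "Q \<in> N P" using bb unfolding N_def by simp
          then have "Q \<in> rch N z (Suc (m-1))" using rch_step[OF Pw(1)] by blast
          then have "Q \<in> rch N z r" using rch_mono[of "Suc (m-1)" r N z] mr m0 by auto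
          moreover have "Q \<noteq> z" using Qs zbig by auto
          ultimately have "Q \<in> X" unfolding X_def by simp
          moreover have "C Q = Q" unfolding C_def using Qs by simp
          ultimately show ?thesis using QT(2) by blast
        qed
      qed
    qed
    have finR: "finite (SXY \<union> BS z \<union> (\<Union>Q\<in>X. C Q))"
    proof -
      have "SXY \<union> BS z \<union> (\<Union>Q\<in>X. C Q) \<subseteq> V" using SXYb BSb[OF zin zbig] Cb XT by blast
      then show ?thesis using fin finite_subset by blast
    qed
    have "card (Sreach V E r L v) \<le> card (SXY \<union> BS z \<union> (\<Union>Q\<in>X. C Q))"
      by (rule card_mono[OF finR incl])
    also have "\<dots> \<le> card SXY + card (BS z) + card (\<Union>Q\<in>X. C Q)"
      by (meson add_le_mono card_Un_le le_trans order_refl)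
    also have "card (\<Union>Q\<in>X. C Q) \<le> (\<Sum>Q\<in>X. card (C Q))" by (rule card_UN_le[OF finX])
    also have "\<dots> \<le> (\<Sum>Q\<in>X. s)" using Cb XT by (intro sum_mono) blast
    also have "\<dots> = card X * s" by simp
    also have "\<dots> \<le> d * (\<Sum>i<r. (d-1)^i) * s" using cardX by simp
    finally have "card (Sreach V E r L v) \<le> card SXY + card (BS z) + d * (\<Sum>i<r. (d-1)^i) * s" by simp
    moreover have "card SXY \<le> 2 * s" using SXYb by simp
    moreover have "card (BS z) \<le> s" using BSb[OF zin zbig] by simp
    ultimately show ?thesis unfolding Bd_def by (simp add: algebra_simps)
  qed
  have SV: "\<And>L v. Sreach V E r L v \<subseteq> V" unfolding Sreach_def by blast
  have maxle: "\<And>L. Max ((\<lambda>v. card (Sreach V E r L v)) ` V) \<le> card V"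
  proof -
    fix L
    show "Max ((\<lambda>v. card (Sreach V E r L v)) ` V) \<le> card V"
      using fin Vne SV by (simp add: card_mono)
  qed
  have finset: "finite {Max ((\<lambda>v. card (Sreach V E r L v)) ` V) | L. linord V L}"
  proof (rule finite_subset[of _ "{..card V}"])
    show "{Max ((\<lambda>v. card (Sreach V E r L v)) ` V) | L. linord V L} \<subseteq> {..card V}" using maxle by auto
  qed simp
  have "scol V E r \<le> Max ((\<lambda>v. card (Sreach V E r L v)) ` V)"
    unfolding scol_def by (rule Min_le[OF finset]) (use Llin in blast)
  also have "\<dots> \<le> Bd" using fin Vne key by simp
  finally show ?thesis unfolding Bd_def s_def .
qed


lemma geom_le:
  fixes d :: nat
  shows "(\<Sum>i<Suc n. (d-1)^i) \<le> d^n \<or> d = 0"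
proof (cases "d = 0")
  case True then show ?thesis by simp
next
  case False
  have "(\<Sum>i<Suc n. (d-1)^i) \<le> d^n"
  proof (induction n)
    case 0 then show ?case by simp
  next
    case (Suc n)
    have "(\<Sum>i<Suc (Suc n). (d-1)^i) = (\<Sum>i<Suc n. (d-1)^i) + (d-1)^Suc n" by simp
    also have "\<dots> \<le> d^n + (d-1) * (d-1)^n" using Suc.IH by simp
    also have "(d-1)^n \<le> d^n" by (rule power_mono) simp_all
    then have "(d-1) * (d-1)^n \<le> (d-1) * d^n" by simp
    then have "d^n + (d-1) * (d-1)^n \<le> d^n + (d-1) * d^n" by simp
    also have "d^n + (d-1) * d^n = d^Suc n" using False by (cases d) simp_all
    finally show ?case by simp
  qed
  then show ?thesis by simp
qed

theorem theorem2:
  fixes V :: "'a set" and E :: "'a set set" and r :: nat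
  assumes "graph V E" and "E \<noteq> {}" and "r \<ge> 1"
  shows "int (scol V E r)
           \<le> (3 + int (tww V E) * (\<Sum>i<r. (int (tww V E) - 1) ^ i)) * int (biclique_num V E)
       \<and> (3 + int (tww V E) * (\<Sum>i<r. (int (tww V E) - 1) ^ i)) * int (biclique_num V E)
           \<le> (int (tww V E) ^ r + 3) * int (biclique_num V E)"
proof -
  have Vne: "V \<noteq> {}" using assms(1,2) unfolding graph_def by blast
  obtain d0 S0 where "contraction_seq V E d0 S0" using exists_seq[OF assms(1) Vne] by blast
  then have ex0: "Ex (contraction_seq V E d0)" by blast
  have "Ex (contraction_seq V E (tww V E))" unfolding tww_def by (rule LeastI[where P="\<lambda>d. Ex (contraction_seq V E d)", OF ex0])
  then have "\<exists>S. contraction_seq V E (tww V E) S" by simp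
  then obtain S where CS: "contraction_seq V E (tww V E) S" by blast
  define d where "d = tww V E"
  define s where "s = biclique_num V E"
  have main: "scol V E r \<le> (3 + d * (\<Sum>i<r. (d-1)^i)) * s"
    using main_bound[OF assms CS] unfolding d_def s_def .
  have conv: "int (d * (\<Sum>i<r. (d-1)^i)) = int d * (\<Sum>i<r. (int d - 1)^i)"
  proof (cases "d = 0")
    case True then show ?thesis by simp
  next
    case False
    then have "int (d - 1) = int d - 1" by simp
    then show ?thesis by (simp add: of_nat_sum)
  qed
  obtain n where n: "r = Suc n" using assms(3) by (cases r) auto
  have g: "d * (\<Sum>i<r. (d-1)^i) \<le> d^r"
  proof (cases "d = 0")
    case True then show ?thesis by simp
  next
    case False
    then have "(\<Sum>i<Suc n. (d-1)^i) \<le> d^n" using geom_le[where d=d and n=n] by simp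
    then have "d * (\<Sum>i<Suc n. (d-1)^i) \<le> d * d^n" by simp
    then show ?thesis using n by simp
  qed
  have A: "int (scol V E r) \<le> (3 + int d * (\<Sum>i<r. (int d - 1)^i)) * int s"
  proof -
    have "int (scol V E r) \<le> int ((3 + d * (\<Sum>i<r. (d-1)^i)) * s)" by (rule of_nat_mono[OF main])
    also have "\<dots> = (3 + int (d * (\<Sum>i<r. (d-1)^i))) * int s" by (simp only: of_nat_mult of_nat_add of_nat_numeral)
    also have "\<dots> = (3 + int d * (\<Sum>i<r. (int d - 1)^i)) * int s" by (simp only: conv)
    finally show ?thesis .
  qed
  have B: "(3 + int d * (\<Sum>i<r. (int d - 1)^i)) * int s \<le> (int d ^ r + 3) * int s"
  proof -
    have "int (d * (\<Sum>i<r. (d-1)^i)) \<le> int (d^r)" by (rule of_nat_mono[OF g])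
    then have "int d * (\<Sum>i<r. (int d - 1)^i) \<le> int d ^ r" by (simp only: conv of_nat_power)
    then have "3 + int d * (\<Sum>i<r. (int d - 1)^i) \<le> int d ^ r + 3" by simp
    then show ?thesis by (rule mult_right_mono) simp
  qed
  show ?thesis using A B unfolding d_def s_def by simp
qed

end
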